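(* Let $f(z)=z+\sum_{k=2}^{\infty}a_kz^k$ be analytic in $\mathbb{D}=\{z\in\mathbb{C}:|z|<1\}$ and suppose $zf'(z)-f(z)=\frac12 z^2\phi(z)$ for all $z\in\mathbb{D}$, where $\phi$ is analytic in $\mathbb{D}$ with $|\phi(z)|\le 1$. For $n\ge 2$ let $\rho_n(z;f)=\sum_{k=n+1}^{\infty}a_kz^k$. Then for $n\ge 2$ and $|z|=r<1$, \[|\rho_n(z;f)|\le -\frac{r}{2}\ln(1-r)-\frac{r^2}{2},\qquad |\rho_n'(z;f)|\le \frac{2r^2-r}{2(1-r)}-\frac{\ln(1-r)}{2},\qquad |z\rho_n''(z;f)|\le \frac{r^2(3-2r)}{2(1-r)^2}.\]
   Context: $\ln$ denotes the natural logarithm. *)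

theory Defs
  imports "HOL-Complex_Analysis.Complex_Analysis"
begin

definition taylor_coeff :: "(complex \<Rightarrow> complex) \<Rightarrow> nat \<Rightarrow> complex" where
  "taylor_coeff f k = (deriv ^^ k) f 0 / of_nat (fact k)"

definition rho :: "(complex \<Rightarrow> complex) \<Rightarrow> nat \<Rightarrow> complex \<Rightarrow> complex" where
  "rho f n z = (\<Sum>j. taylor_coeff f (j + n + 1) * z ^ (j + n + 1))"

end

theory Submission
  imports Defs
begin


lemma ps_at:
  fixes g :: "complex \<Rightarrow> complex"
  assumes "g holomorphic_on ball 0 1" "g has_fps_expansion G" "norm z < 1"
  shows "(\<lambda>k. G $ k * z ^ k) sums g z"
proof -
  have "(\<lambda>k. (deriv ^^ k) g 0 / fact k * (z - 0) ^ k) sums g z"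
    by (rule holomorphic_power_series[OF assms(1)]) (use assms(3) in simp)
  thus ?thesis using fps_nth_fps_expansion[OF assms(2)] by simp
qed

lemma norm_bound:
  fixes c :: "nat \<Rightarrow> complex"
  assumes "(\<lambda>k. c k * z ^ k) sums s" "\<And>k. norm (c k) \<le> b k"
    and "(\<lambda>k. b k * norm z ^ k) sums T"
  shows "norm s \<le> T"
proof -
  have le: "norm (c k * z ^ k) \<le> b k * norm z ^ k" for k
    by (simp add: norm_mult norm_power mult_right_mono assms(2))
  have sb: "summable (\<lambda>k. norm (c k * z ^ k))"
    by (rule summable_comparison_test'[OF sums_summable[OF assms(3)]]) (use le in auto)
  have "s = (\<Sum>k. c k * z ^ k)" using assms(1) sums_unique by blast
  hence "norm s \<le> (\<Sum>k. norm (c k * z ^ k))" using summable_norm[OF sb] by simp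
  also have "\<dots> \<le> (\<Sum>k. b k * norm z ^ k)"
    by (rule suminf_le[OF le sb sums_summable[OF assms(3)]])
  also have "\<dots> = T" using assms(3) sums_unique by metis
  finally show ?thesis .
qed

lemma coeff_le1:
  fixes \<phi> :: "complex \<Rightarrow> complex"
  assumes "\<phi> holomorphic_on ball 0 1" "\<forall>w\<in>ball 0 1. norm (\<phi> w) \<le> 1"
  shows "norm ((deriv ^^ j) \<phi> 0 / fact j) \<le> 1"
proof -
  have ev: "eventually (\<lambda>s. norm ((deriv ^^ j) \<phi> 0 / fact j) \<le> 1 / s ^ j) (at_left (1::real))"
  proof -
    have e0: "eventually (\<lambda>s. s \<in> {0<..<1}) (at_left (1::real))"
      by (rule eventually_at_left_real) simp
    from e0 show ?thesis
  proof eventually_elim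
    case (elim s)
    hence s: "0 < s" "s < 1" by auto
    have "norm ((deriv ^^ j) \<phi> 0) \<le> fact j * 1 / s ^ j"
    proof (rule Cauchy_inequality)
      show "\<phi> holomorphic_on ball 0 s" using s by (intro holomorphic_on_subset[OF assms(1)]) auto
      have "continuous_on (ball 0 1) \<phi>" using assms(1) holomorphic_on_imp_continuous_on by blast
      thus "continuous_on (cball 0 s) \<phi>" by (rule continuous_on_subset) (use s in auto)
      show "norm (\<phi> x) \<le> 1" if "norm (0 - x) = s" for x using assms(2) that s by auto
    qed (use s in auto)
    with s show ?case by (simp add: norm_divide divide_simps)
  qed
  qed
  have "((\<lambda>s. 1 / s ^ j) \<longlongrightarrow> 1 / 1 ^ j) (at_left (1::real))"
    by (intro tendsto_intros) auto
  hence "((\<lambda>s. 1 / s ^ j) \<longlongrightarrow> 1) (at_left (1::real))" by simp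
  thus ?thesis
    using tendsto_le[OF trivial_limit_at_left_real _ tendsto_const ev] by blast
qed



lemma lnser:
  fixes r :: real assumes r: "0 \<le> r" "r < 1"
  shows "(\<lambda>i. r^(i+2) / real (i+2)) sums (- ln (1 - r) - r)"
proof -
  have "(\<lambda>n. - ((-(-r))^n) / of_nat n) sums ln (1 + (-r))"
    by (rule ln_series') (use r in auto)
  hence "(\<lambda>n. - (- ((-(-r))^n) / of_nat n)) sums (- ln (1 + (-r)))"
    by (rule sums_minus)
  hence a: "(\<lambda>n. r^n / real n) sums (- ln (1 - r))" by simp
  have "(\<lambda>i. r^(i+2) / real (i+2)) sums (- ln (1 - r) - (\<Sum>i<2. r^i / real i))"
    using a by (subst sums_iff_shift) simp
  thus ?thesis by (simp add: numeral_2_eq_2)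
qed

definition bb :: "nat \<Rightarrow> real" where "bb k = (if 3 \<le> k then 1 / (2 * (real k - 1)) else 0)"

lemma T1:
  fixes r :: real assumes r: "0 \<le> r" "r < 1"
  shows "(\<lambda>k. bb k * r^k) sums (- (r / 2) * ln (1 - r) - r^2 / 2)"
proof -
  have "(\<lambda>i. (r/2) * (r^(i+2) / real (i+2))) sums ((r/2) * (- ln (1 - r) - r))"
    by (rule sums_mult[OF lnser[OF r]])
  moreover have "(r/2) * (r^(i+2) / real (i+2)) = bb (i+3) * r^(i+3)" for i
    by (simp add: bb_def field_simps power_add eval_nat_numeral)
  ultimately have "(\<lambda>i. bb (i+3) * r^(i+3)) sums ((r/2) * (- ln (1 - r) - r))" by simp
  hence "(\<lambda>k. bb k * r^k) sums ((r/2) * (- ln (1 - r) - r) + (\<Sum>i<3. bb i * r^i))"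
    by (subst (asm) sums_iff_shift)
  moreover have "(\<Sum>i<3. bb i * r^i) = 0" by (simp add: bb_def eval_nat_numeral)
  ultimately show ?thesis by (simp add: field_simps power2_eq_square)
qed

lemma T2:
  fixes r :: real assumes r: "0 \<le> r" "r < 1"
  shows "(\<lambda>k. (real (k+1) * bb (k+1)) * r^k) sums ((2 * r^2 - r) / (2 * (1 - r)) - ln (1 - r) / 2)"
proof -
  have g: "(\<lambda>i. r^2 * r^i) sums (r^2 * (1 / (1 - r)))"
    by (rule sums_mult[OF geometric_sums]) (use r in auto)
  have "(\<lambda>i. (1/2) * (r^2 * r^i) + (1/2) * (r^(i+2) / real (i+2))) sums
        ((1/2) * (r^2 * (1 / (1 - r))) + (1/2) * (- ln (1 - r) - r))"
    by (intro sums_add sums_mult g lnser r)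
  moreover have "(1/2) * (r^2 * r^i) + (1/2) * (r^(i+2) / real (i+2)) = real (i+2+1) * bb (i+2+1) * r^(i+2)" for i
    by (simp add: bb_def field_simps power_add power2_eq_square)
  ultimately have "(\<lambda>i. real (i+2+1) * bb (i+2+1) * r^(i+2)) sums ((1/2) * (r^2 * (1 / (1 - r))) + (1/2) * (- ln (1 - r) - r))" by simp
  hence "(\<lambda>k. real (k+1) * bb (k+1) * r^k) sums ((1/2) * (r^2 * (1 / (1 - r))) + (1/2) * (- ln (1 - r) - r) + (\<Sum>i<2. real (i+1) * bb (i+1) * r^i))"
    by (subst (asm) sums_iff_shift)
  moreover have "(\<Sum>i<2. real (i+1) * bb (i+1) * r^i) = 0" by (simp add: bb_def eval_nat_numeral)
  moreover have "(1/2) * (r^2 * (1 / (1 - r))) + (1/2) * (- ln (1 - r) - r) = (2 * r^2 - r) / (2 * (1 - r)) - ln (1 - r) / 2"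
    using r by (simp add: field_simps power2_eq_square)
  ultimately show ?thesis by simp
qed

lemma T3:
  fixes r :: real assumes r: "0 \<le> r" "r < 1"
  shows "(\<lambda>k. (real (k+1) * real (k+2) * bb (k+2)) * r^k) sums (r * (3 - 2 * r) / (2 * (1 - r)^2))"
proof -
  have g: "(\<lambda>i. r * r^i) sums (r * (1 / (1 - r)))"
    by (rule sums_mult[OF geometric_sums]) (use r in auto)
  have d: "(\<lambda>i. of_nat (Suc i) * r^i) sums (1 / (1 - r)^2)"
    by (rule geometric_deriv_sums) (use r in auto)
  have "(\<lambda>i. (r/2) * (of_nat (Suc i) * r^i) + r * r^i) sums ((r/2) * (1 / (1 - r)^2) + r * (1 / (1 - r)))"
    by (intro sums_add sums_mult d geometric_sums) (use r in auto)
  moreover have "(r/2) * (of_nat (Suc i) * r^i) + r * r^i = real (i+1+1) * real (i+1+2) * bb (i+1+2) * r^(i+1)" for i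
    by (simp add: bb_def field_simps)
  ultimately have "(\<lambda>i. real (i+1+1) * real (i+1+2) * bb (i+1+2) * r^(i+1)) sums ((r/2) * (1 / (1 - r)^2) + r * (1 / (1 - r)))" by simp
  hence "(\<lambda>k. real (k+1) * real (k+2) * bb (k+2) * r^k) sums ((r/2) * (1 / (1 - r)^2) + r * (1 / (1 - r)) + (\<Sum>i<1. real (i+1) * real (i+2) * bb (i+2) * r^i))"
    by (subst (asm) sums_iff_shift)
  moreover have "(\<Sum>i<1. real (i+1) * real (i+2) * bb (i+2) * r^i) = 0" by (simp add: bb_def)
  moreover have "(r/2) * (1 / (1 - r)^2) + r * (1 / (1 - r)) = r * (3 - 2 * r) / (2 * (1 - r)^2)"
  proof -
  have d: "(1 - r) \<noteq> 0" using r by simp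
  have "r * (1 / (1 - r)) = (2 * r * (1 - r)) / (2 * (1 - r)^2)" using d by (simp add: power2_eq_square)
  moreover have "(r/2) * (1 / (1 - r)^2) = r / (2 * (1 - r)^2)" by simp
  ultimately have "(r/2) * (1 / (1 - r)^2) + r * (1 / (1 - r)) = (r + 2 * r * (1 - r)) / (2 * (1 - r)^2)"
    by (simp add: add_divide_distrib)
  also have "r + 2 * r * (1 - r) = r * (3 - 2 * r)" by (simp add: algebra_simps)
  finally show ?thesis .
  qed
  ultimately show ?thesis by simp
qed



theorem lemma1p4:
  fixes f \<phi> :: "complex \<Rightarrow> complex" and n :: nat and z :: complex
  assumes hf: "f holomorphic_on ball 0 1"
    and f0: "f 0 = 0" and f'0: "deriv f 0 = 1"
    and hphi: "\<phi> holomorphic_on ball 0 1"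
    and phib: "\<forall>w\<in>ball 0 1. norm (\<phi> w) \<le> 1"
    and eq: "\<forall>w\<in>ball 0 1. w * deriv f w - f w = 1/2 * w^2 * \<phi> w"
    and n: "n \<ge> 2"
    and z: "norm z < 1"
  shows "norm (rho f n z) \<le> - (norm z / 2) * ln (1 - norm z) - (norm z)^2 / 2
       \<and> norm (deriv (rho f n) z) \<le> (2 * (norm z)^2 - norm z) / (2 * (1 - norm z)) - ln (1 - norm z) / 2
       \<and> norm (z * deriv (deriv (rho f n)) z) \<le> (norm z)^2 * (3 - 2 * norm z) / (2 * (1 - norm z)^2)"
proof -
  define a where "a k = taylor_coeff f k" for k
  have r: "0 \<le> norm z" "norm z < 1" using z by auto
  have an: "g analytic_on {0}" if "g holomorphic_on ball 0 1" for g :: "complex \<Rightarrow> complex"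
    by (rule analytic_on_subset[of _ "ball 0 1"]) (use that in \<open>auto simp: analytic_on_open\<close>)
  define F where "F = fps_expansion f 0"
  have fF: "f has_fps_expansion F" unfolding F_def by (rule analytic_at_imp_has_fps_expansion_0[OF an[OF hf]])
  have Fa: "F $ k = a k" for k using fps_nth_fps_expansion[OF fF] by (simp add: a_def taylor_coeff_def)
  define \<Phi> where "\<Phi> = fps_expansion \<phi> 0"
  have pP: "\<phi> has_fps_expansion \<Phi>" unfolding \<Phi>_def by (rule analytic_at_imp_has_fps_expansion_0[OF an[OF hphi]])
  have \<Phi>b: "norm (\<Phi> $ j) \<le> 1" for j using fps_nth_fps_expansion[OF pP] coeff_le1[OF hphi phib] by simp
  have e1: "(\<lambda>w. w * deriv f w - f w) has_fps_expansion fps_X * fps_deriv F - F"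
    by (intro has_fps_expansion_diff has_fps_expansion_mult has_fps_expansion_fps_X has_fps_expansion_deriv fF)
  have e2: "(\<lambda>w. 1/2 * w^2 * \<phi> w) has_fps_expansion fps_const (1/2) * fps_X^2 * \<Phi>"
    by (intro has_fps_expansion_mult has_fps_expansion_const has_fps_expansion_fps_X_power pP)
  have ev: "eventually (\<lambda>w. w \<in> ball 0 1) (nhds (0::complex))" by (intro eventually_nhds_in_open) auto
  have evA: "eventually (\<lambda>w. 1/2*w^2*\<phi> w = w * deriv f w - f w) (nhds 0)"
    using ev by eventually_elim (use eq in auto)
  have e2': "(\<lambda>w. w * deriv f w - f w) has_fps_expansion fps_const (1/2) * fps_X^2 * \<Phi>"
    using has_fps_expansion_cong[OF evA refl] e2 by simp
  have coef: "(fps_X * fps_deriv F - F) $ k = (fps_const (1/2) * fps_X^2 * \<Phi>) $ k" for k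
    using fps_nth_fps_expansion[OF e1, of k] fps_nth_fps_expansion[OF e2', of k] by simp
  have ak: "norm (a k) \<le> 1 / (2 * (real k - 1))" if k: "k \<ge> 2" for k
  proof -
    have "norm (complex_of_nat k - 1) = norm (complex_of_real (real k - 1))" by simp
    also have "\<dots> = real k - 1" by (subst norm_of_real) (use k in simp)
    finally have nk: "norm (complex_of_nat k - 1) = real k - 1" .
    have "of_nat k * a k - a k = 1/2 * \<Phi> $ (k-2)"
      using coef[of k] k by (simp add: Fa fps_X_power_mult_nth mult.assoc)
    hence "(of_nat k - 1) * a k = 1/2 * \<Phi> $ (k-2)" by (simp add: algebra_simps)
    hence "norm ((of_nat k - 1) * a k) = norm (1/2 * \<Phi> $ (k-2))" by (rule arg_cong)
    hence "(real k - 1) * norm (a k) = norm (\<Phi> $ (k-2)) / 2" by (simp only: norm_mult nk) simp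
    also have "\<dots> \<le> 1 / 2" using \<Phi>b by simp
    finally have "(real k - 1) * norm (a k) \<le> 1/2" .
    thus ?thesis using k by (simp add: field_simps)
  qed
  define P where "P w = (\<Sum>k<n+1. a k * w^k)" for w
  have S1: "(\<lambda>k. a k * w^k) sums f w" if "w \<in> ball 0 1" for w
    using ps_at[OF hf fF, of w] that by (simp add: Fa)
  have S2: "rho f n w = f w - P w" if "w \<in> ball 0 1" for w
  proof -
    have "(\<lambda>i. a (i + (n+1)) * w^(i + (n+1))) sums (f w - P w)"
      using sums_split_initial_segment[OF S1[OF that], of "n+1"] by (simp add: P_def)
    moreover have "rho f n w = (\<Sum>i. a (i + (n+1)) * w^(i + (n+1)))"
      by (simp add: rho_def a_def add.assoc)
    ultimately show ?thesis using sums_unique by metis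
  qed
  define h where "h = rho f n"
  have hh: "h holomorphic_on ball 0 1"
  proof (rule holomorphic_transform[of "\<lambda>w. f w - P w"])
    show "(\<lambda>w. f w - P w) holomorphic_on ball 0 1" unfolding P_def
      by (intro holomorphic_intros hf)
  qed (use S2 h_def in auto)
  have Pe: "P has_fps_expansion (\<Sum>k<n+1. fps_const (a k) * fps_X^k)" unfolding P_def
    by (intro has_fps_expansion_sum has_fps_expansion_cmult_left has_fps_expansion_fps_X_power)
  define B where "B = F - (\<Sum>k<n+1. fps_const (a k) * fps_X^k)"
  have evB: "eventually (\<lambda>w. f w - P w = h w) (nhds 0)"
    using ev by eventually_elim (use S2 h_def in auto)
  have hB: "h has_fps_expansion B"
    using has_fps_expansion_cong[OF evB refl] has_fps_expansion_diff[OF fF Pe] unfolding B_def by simp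
  have Bn: "B $ k = (if n < k then a k else 0)" for k
  proof -
    have "(\<Sum>i<n+1. a i * (if k = i then 1 else 0)) = (\<Sum>i<n+1. if k = i then a i else 0)"
      by (rule sum.cong) auto
    also have "\<dots> = (if k < n+1 then a k else 0)" by (simp add: sum.delta)
    finally show ?thesis unfolding B_def by (simp add: Fa fps_sum_nth fps_X_power_nth)
  qed
  have bb0: "0 \<le> bb k" for k by (simp add: bb_def)
  have Bb: "norm (B $ k) \<le> bb k" for k
  proof (cases "n < k")
    case True
    thus ?thesis using ak[of k] n by (simp add: Bn bb_def)
  qed (simp add: Bn bb0)
  have p1: "norm (h z) \<le> - (norm z / 2) * ln (1 - norm z) - (norm z)^2 / 2"
    by (rule norm_bound[OF ps_at[OF hh hB z] Bb T1[OF r]])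
  have hh': "deriv h holomorphic_on ball 0 1" by (rule holomorphic_deriv[OF hh]) simp
  have hh'': "deriv (deriv h) holomorphic_on ball 0 1" by (rule holomorphic_deriv[OF hh']) simp
  have hB': "deriv h has_fps_expansion fps_deriv B" by (rule has_fps_expansion_deriv[OF hB])
  have hB'': "deriv (deriv h) has_fps_expansion fps_deriv (fps_deriv B)" by (rule has_fps_expansion_deriv[OF hB'])
  have Bb': "norm (fps_deriv B $ k) \<le> real (k+1) * bb (k+1)" for k
    using Bb[of "k+1"] by (simp add: norm_mult mult_left_mono del: of_nat_Suc)
  have Bb'': "norm (fps_deriv (fps_deriv B) $ k) \<le> real (k+1) * real (k+2) * bb (k+2)" for k
  proof -
    have "norm (fps_deriv (fps_deriv B) $ k) = real (k+1) * (real (k+2) * norm (B $ (k+2)))"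
      by (simp add: norm_mult del: of_nat_Suc)
    also have "\<dots> \<le> real (k+1) * (real (k+2) * bb (k+2))"
      using Bb[of "k+2"] by (intro mult_left_mono) auto
    finally show ?thesis by simp
  qed
  have p2: "norm (deriv h z) \<le> (2 * (norm z)^2 - norm z) / (2 * (1 - norm z)) - ln (1 - norm z) / 2"
    by (rule norm_bound[OF ps_at[OF hh' hB' z] Bb' T2[OF r]])
  have p3: "norm (deriv (deriv h) z) \<le> norm z * (3 - 2 * norm z) / (2 * (1 - norm z)^2)"
    by (rule norm_bound[OF ps_at[OF hh'' hB'' z] Bb'' T3[OF r]])
  have "norm (z * deriv (deriv h) z) \<le> norm z * (norm z * (3 - 2 * norm z) / (2 * (1 - norm z)^2))"
    unfolding norm_mult by (rule mult_left_mono[OF p3]) simp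
  hence p3': "norm (z * deriv (deriv h) z) \<le> (norm z)^2 * (3 - 2 * norm z) / (2 * (1 - norm z)^2)"
    by (simp add: power2_eq_square)
  show ?thesis using p1 p2 p3' unfolding h_def by blast
qed

end
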